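(* Let $\mathfrak H$ be a P-module. There exist $n\geq 1$, irreducible sub-modules $\mathfrak H_i\subset\mathfrak H$ for $1\leq i\leq n$, and a vector subspace $\mathfrak H_{\mathrm{res}}\subset\mathfrak H$ containing no non-zero sub-module, such that $\mathfrak H=\left(\bigoplus_{i=1}^n\mathfrak H_i\right)\oplus\mathfrak H_{\mathrm{res}}$ (orthogonal direct sum).
   Context: A Pythagorean module (P-module) is a triple $(A,B,\mathfrak H)$ where $\mathfrak H$ is a finite-dimensional complex Hilbert space and $A,B$ are linear operators on $\mathfrak H$ with $A^*A+B^*B=\mathrm{id}_{\mathfrak H}$. A sub-module is a subspace $\mathfrak K\subset\mathfrak H$ with $A\mathfrak K\subset\mathfrak K$ and $B\mathfrak K\subset\mathfrak K$ (no invariance under $A^*,B^*$ is required), equipped with the restrictions of $A,B$. A P-module is irreducible if it has no sub-module other than $\{0\}$ and itself. *)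

theory Defs
  imports "HOL-Analysis.Analysis"
begin

text \<open>A finite-dimensional complex Hilbert space is modelled (up to unitary
isomorphism) as complex^'d with the standard inner product; operators are
matrices acting by *v.\<close>

definition cinner :: "complex^'d \<Rightarrow> complex^'d \<Rightarrow> complex" where
  "cinner x y = (\<Sum>i\<in>UNIV. x$i * cnj (y$i))"

definition adjoint_mat :: "complex^'d^'d \<Rightarrow> complex^'d^'d" where
  "adjoint_mat M = (\<chi> i j. cnj (M$j$i))"

definition P_module :: "complex^'d^'d \<Rightarrow> complex^'d^'d \<Rightarrow> bool" where
  "P_module A B \<longleftrightarrow> adjoint_mat A ** A + adjoint_mat B ** B = mat 1"

definition csubspace :: "(complex^'d) set \<Rightarrow> bool" where
  "csubspace S \<longleftrightarrow> 0 \<in> S \<and> (\<forall>x\<in>S. \<forall>y\<in>S. x + y \<in> S) \<and> (\<forall>c. \<forall>x\<in>S. c *s x \<in> S)"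

definition submodule :: "complex^'d^'d \<Rightarrow> complex^'d^'d \<Rightarrow> (complex^'d) set \<Rightarrow> bool" where
  "submodule A B K \<longleftrightarrow> csubspace K \<and> (\<forall>x\<in>K. A *v x \<in> K) \<and> (\<forall>x\<in>K. B *v x \<in> K)"

definition irreducible_submodule :: "complex^'d^'d \<Rightarrow> complex^'d^'d \<Rightarrow> (complex^'d) set \<Rightarrow> bool" where
  "irreducible_submodule A B K \<longleftrightarrow> submodule A B K \<and> K \<noteq> {0} \<and>
     (\<forall>L. submodule A B L \<and> L \<subseteq> K \<longrightarrow> L = {0} \<or> L = K)"

definition orth :: "(complex^'d) set \<Rightarrow> (complex^'d) set \<Rightarrow> bool" where
  "orth S T \<longleftrightarrow> (\<forall>x\<in>S. \<forall>y\<in>T. cinner x y = 0)"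

end

theory Submission
  imports Defs
begin

lemma scaleR_as_scalar: "(c::real) *\<^sub>R (x::complex^'d) = (complex_of_real c) *s x"
  by (simp add: vec_eq_iff) (simp add: scaleR_conv_of_real)

lemma csub_subspace: "csubspace S \<Longrightarrow> subspace S"
  unfolding csubspace_def subspace_def by (simp add: scaleR_as_scalar)

lemma inner_cinner: "inner x y = Re (cinner x y)"
  unfolding cinner_def inner_vec_def inner_complex_def by (simp add: Re_sum)

lemma cinner_self0: "cinner x x = 0 \<Longrightarrow> x = 0"
  using inner_cinner[of x x] by simp

lemma cinner_sym: "cinner y x = cnj (cinner x y)"
  unfolding cinner_def by (simp add: mult.commute)

lemma cinner_scal: "cinner z (a *s w) = cnj a * cinner z w"
  unfolding cinner_def by (simp add: sum_distrib_left algebra_simps)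

lemma proj_exists:
  assumes "csubspace H"
  shows "\<exists>h\<in>H. \<forall>y\<in>H. cinner (x - h) y = 0"
proof -
  have sp: "span H = H" using csub_subspace[OF assms] by (simp add: span_eq_iff)
  obtain y z where y: "y \<in> span H" and z: "\<And>w. w \<in> span H \<Longrightarrow> orthogonal z w" and xe: "x = y + z"
    using orthogonal_subspace_decomp_exists by blast
  have "cinner z w = 0" if w: "w \<in> H" for w
  proof -
    have "Re (cinner z w) = 0" using z[of w] w sp by (simp add: orthogonal_def inner_cinner)
    moreover have "\<i> *s w \<in> H" using assms w unfolding csubspace_def by blast
    then have "Re (cinner z (\<i> *s w)) = 0" using z[of "\<i> *s w"] sp by (simp add: orthogonal_def inner_cinner)
    then have "Im (cinner z w) = 0" by (simp add: cinner_scal)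
    ultimately show ?thesis by (simp add: complex_eq_iff)
  qed
  then show ?thesis using y sp xe by (intro bexI[of _ y]) auto
qed

lemma irr_exists:
  "\<forall>K. submodule A B K \<and> K \<noteq> {0} \<and> dim K \<le> k \<longrightarrow> (\<exists>H. irreducible_submodule A B H \<and> H \<subseteq> K)"
proof (induction k rule: less_induct)
  case (less k)
  show ?case
  proof (intro allI impI)
    fix K assume K: "submodule A B K \<and> K \<noteq> {0} \<and> dim K \<le> k"
    show "\<exists>H. irreducible_submodule A B H \<and> H \<subseteq> K"
    proof (cases "irreducible_submodule A B K")
      case True then show ?thesis by blast
    next
      case False
      then obtain L where L: "submodule A B L" "L \<subseteq> K" "L \<noteq> {0}" "L \<noteq> K"
        using K unfolding irreducible_submodule_def by blast
      have "subspace L" "subspace K" using L K csub_subspace unfolding submodule_def by auto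
      then have "dim L < dim K" using L dim_psubset[of L K] by (metis span_eq_iff psubset_eq)
      then have "dim L \<le> dim L" "dim L < k" using K by auto
      then have "\<exists>H. irreducible_submodule A B H \<and> H \<subseteq> L"
        using less.IH[of "dim L"] L(1,3) by blast
      then show ?thesis using L by blast
    qed
  qed
qed

lemma cinner_add_left: "cinner (x + y) z = cinner x z + cinner y z"
  unfolding cinner_def by (simp add: sum.distrib algebra_simps)

lemma cinner_scal_left: "cinner (c *s x) z = c * cinner x z"
  unfolding cinner_def by (simp add: sum_distrib_left algebra_simps)

lemma cinner_zero_left: "cinner 0 z = 0"
  unfolding cinner_def by simp

lemma csub_diff: "csubspace W \<Longrightarrow> x \<in> W \<Longrightarrow> y \<in> W \<Longrightarrow> x - y \<in> W"
proof -
  assume W: "csubspace W" "x \<in> W" "y \<in> W"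
  then have "(-1) *s y \<in> W" unfolding csubspace_def by blast
  then have "x + (-1) *s y \<in> W" using W unfolding csubspace_def by blast
  moreover have "x + (-1) *s y = x - y" by (simp add: vec_eq_iff)
  ultimately show ?thesis by simp
qed

lemma decomp:
  "\<forall>W. csubspace W \<and> dim W \<le> k \<longrightarrow> (\<exists>(n::nat) (Hs::nat\<Rightarrow>(complex^'d) set) Hres.
     (\<forall>i\<in>{1..n}. irreducible_submodule A B (Hs i) \<and> Hs i \<subseteq> W) \<and>
     csubspace Hres \<and> Hres \<subseteq> W \<and>
     (\<forall>K. submodule A B K \<and> K \<subseteq> Hres \<longrightarrow> K = {0}) \<and>
     (\<forall>i\<in>{1..n}. \<forall>j\<in>{1..n}. i \<noteq> j \<longrightarrow> orth (Hs i) (Hs j)) \<and>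
     (\<forall>i\<in>{1..n}. orth (Hs i) Hres) \<and>
     (\<forall>x\<in>W. \<exists>v r. (\<forall>i\<in>{1..n}. v i \<in> Hs i) \<and> r \<in> Hres \<and> x = (\<Sum>i=1..n. v i) + r))"
proof (induction k rule: less_induct)
  case (less k)
  show ?case
  proof (intro allI impI)
    fix W :: "(complex^'d) set" assume W: "csubspace W \<and> dim W \<le> k"
    show "\<exists>(n::nat) (Hs::nat\<Rightarrow>(complex^'d) set) Hres.
     (\<forall>i\<in>{1..n}. irreducible_submodule A B (Hs i) \<and> Hs i \<subseteq> W) \<and>
     csubspace Hres \<and> Hres \<subseteq> W \<and>
     (\<forall>K. submodule A B K \<and> K \<subseteq> Hres \<longrightarrow> K = {0}) \<and>
     (\<forall>i\<in>{1..n}. \<forall>j\<in>{1..n}. i \<noteq> j \<longrightarrow> orth (Hs i) (Hs j)) \<and>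
     (\<forall>i\<in>{1..n}. orth (Hs i) Hres) \<and>
     (\<forall>x\<in>W. \<exists>v r. (\<forall>i\<in>{1..n}. v i \<in> Hs i) \<and> r \<in> Hres \<and> x = (\<Sum>i=1..n. v i) + r)"
    proof (cases "\<forall>K. submodule A B K \<and> K \<subseteq> W \<longrightarrow> K = {0}")
      case True
      show ?thesis
        apply (rule exI[where x="0::nat"])
        apply (rule exI[where x="\<lambda>_::nat. {}"])
        apply (rule exI[where x=W])
        using True W by auto
    next
      case False
      then obtain K where K: "submodule A B K" "K \<subseteq> W" "K \<noteq> {0}" by blast
      then obtain H where H: "irreducible_submodule A B H" "H \<subseteq> K"
        using irr_exists[of A B "dim K"] by blast
      have Hs: "csubspace H" using H unfolding irreducible_submodule_def submodule_def by blast
      obtain h0 where h0: "h0 \<in> H" "h0 \<noteq> 0"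
        using H Hs unfolding irreducible_submodule_def csubspace_def by blast
      define W' where "W' = {x\<in>W. \<forall>h\<in>H. cinner x h = 0}"
      have W'c: "csubspace W'"
        using W unfolding W'_def csubspace_def
        by (auto simp: cinner_add_left cinner_scal_left cinner_zero_left)
      have "W' \<subseteq> W" unfolding W'_def by auto
      moreover have "h0 \<in> W" "h0 \<notin> W'" using h0 H K cinner_self0[of h0] unfolding W'_def by auto
      ultimately have "W' \<subset> W" by blast
      moreover have "subspace W'" "subspace W" using W'c W csub_subspace by auto
      ultimately have "dim W' < dim W" using dim_psubset[of W' W] by (metis span_eq_iff)
      then have "dim W' \<le> dim W'" "dim W' < k" using W by auto
      then obtain n :: nat and Hs :: "nat \<Rightarrow> (complex^'d) set" and Hres where IH:
        "\<forall>i\<in>{1..n}. irreducible_submodule A B (Hs i) \<and> Hs i \<subseteq> W'"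
        "csubspace Hres" "Hres \<subseteq> W'"
        "\<forall>K. submodule A B K \<and> K \<subseteq> Hres \<longrightarrow> K = {0}"
        "\<forall>i\<in>{1..n}. \<forall>j\<in>{1..n}. i \<noteq> j \<longrightarrow> orth (Hs i) (Hs j)"
        "\<forall>i\<in>{1..n}. orth (Hs i) Hres"
        "\<forall>x\<in>W'. \<exists>v r. (\<forall>i\<in>{1..n}. v i \<in> Hs i) \<and> r \<in> Hres \<and> x = (\<Sum>i=1..n. v i) + r"
        using less.IH[rule_format, OF \<open>dim W' < k\<close>, of W'] W'c by blast
      define Hs' where "Hs' = Hs(Suc n := H)"
      have orthW1: "orth S H" if "S \<subseteq> W'" for S
        using that unfolding orth_def W'_def by blast
      have orthW2: "orth H S" if "S \<subseteq> W'" for S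
        unfolding orth_def
      proof (intro ballI)
        fix x y assume "x \<in> H" "y \<in> S"
        then have "cinner y x = 0" using that unfolding W'_def by blast
        then show "cinner x y = 0" using cinner_sym[of x y] by simp
      qed
      have spl: "i = Suc n \<or> i \<in> {1..n}" if "i \<in> {1..Suc n}" for i using that by auto
      have Hs'1: "Hs' (Suc n) = H" and Hs'2: "\<And>i. i \<in> {1..n} \<Longrightarrow> Hs' i = Hs i"
        unfolding Hs'_def by auto
      show ?thesis
      proof (rule exI[of _ "Suc n"], rule exI[of _ Hs'], rule exI[of _ Hres], intro conjI)
        show "\<forall>i\<in>{1..Suc n}. irreducible_submodule A B (Hs' i) \<and> Hs' i \<subseteq> W"
        proof
          fix i assume i: "i \<in> {1..Suc n}"
          show "irreducible_submodule A B (Hs' i) \<and> Hs' i \<subseteq> W"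
          proof (cases "i = Suc n")
            case True
            then show ?thesis using Hs'1 H K by auto
          next
            case False
            then have "i \<in> {1..n}" using i spl by blast
            then show ?thesis using Hs'2 IH(1) \<open>W' \<subseteq> W\<close> by (metis subset_trans)
          qed
        qed
        show "csubspace Hres" "Hres \<subseteq> W" using IH(2,3) \<open>W' \<subseteq> W\<close> by auto
        show "\<forall>K. submodule A B K \<and> K \<subseteq> Hres \<longrightarrow> K = {0}" using IH(4) by blast
        show "\<forall>i\<in>{1..Suc n}. \<forall>j\<in>{1..Suc n}. i \<noteq> j \<longrightarrow> orth (Hs' i) (Hs' j)"
        proof (intro ballI impI)
          fix i j assume ij: "i \<in> {1..Suc n}" "j \<in> {1..Suc n}" "i \<noteq> j"
          show "orth (Hs' i) (Hs' j)"
          proof (cases "i = Suc n")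
            case True
            then have "j \<in> {1..n}" using ij spl by blast
            then show ?thesis using True Hs'1 Hs'2 orthW2 IH(1) by simp
          next
            case False
            then have i: "i \<in> {1..n}" using ij spl by blast
            show ?thesis
            proof (cases "j = Suc n")
              case True
              then show ?thesis using i Hs'1 Hs'2 orthW1 IH(1) by simp
            next
              case False
              then have "j \<in> {1..n}" using ij spl by blast
              then show ?thesis using i ij(3) Hs'2 IH(5) by simp
            qed
          qed
        qed
        show "\<forall>i\<in>{1..Suc n}. orth (Hs' i) Hres"
        proof
          fix i assume i: "i \<in> {1..Suc n}"
          show "orth (Hs' i) Hres"
          proof (cases "i = Suc n")
            case True
            then show ?thesis using Hs'1 orthW2 IH(3) by auto
          next
            case False
            then have "i \<in> {1..n}" using i spl by blast
            then show ?thesis using Hs'2 IH(6) by auto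
          qed
        qed
        show "\<forall>x\<in>W. \<exists>v r. (\<forall>i\<in>{1..Suc n}. v i \<in> Hs' i) \<and> r \<in> Hres \<and> x = (\<Sum>i=1..Suc n. v i) + r"
        proof
          fix x assume x: "x \<in> W"
          obtain h where h: "h \<in> H" "\<forall>y\<in>H. cinner (x - h) y = 0" using proj_exists[OF Hs] by blast
          have "h \<in> W" using h H K by auto
          then have "x - h \<in> W'" using csub_diff[of W x h] W x h unfolding W'_def by auto
          then obtain v r where vr: "\<forall>i\<in>{1..n}. v i \<in> Hs i" "r \<in> Hres" "x - h = (\<Sum>i=1..n. v i) + r"
            using IH(7) by blast
          define v' where "v' = v(Suc n := h)"
          have "(\<Sum>i=1..Suc n. v' i) = (\<Sum>i=1..n. v' i) + h" by (simp add: v'_def)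
          also have "(\<Sum>i=1..n. v' i) = (\<Sum>i=1..n. v i)" unfolding v'_def by (rule sum.cong) auto
          finally have "x = (\<Sum>i=1..Suc n. v' i) + r" using vr(3) by (simp add: algebra_simps)
          moreover have "\<forall>i\<in>{1..Suc n}. v' i \<in> Hs' i"
          proof
            fix i assume i: "i \<in> {1..Suc n}"
            show "v' i \<in> Hs' i"
            proof (cases "i = Suc n")
              case True
              then show ?thesis using Hs'1 h unfolding v'_def by auto
            next
              case False
              then have "i \<in> {1..n}" using i spl by blast
              then show ?thesis using Hs'2 vr(1) False unfolding v'_def by auto
            qed
          qed
          ultimately show "\<exists>v r. (\<forall>i\<in>{1..Suc n}. v i \<in> Hs' i) \<and> r \<in> Hres \<and> x = (\<Sum>i=1..Suc n. v i) + r"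
            using vr(2) by blast
        qed
      qed
    qed
  qed
qed

theorem lemma2p1:
  fixes A B :: "complex^'d^'d"
  assumes "P_module A B"
  shows "\<exists>n::nat. n \<ge> 1 \<and> (\<exists>Hs :: nat \<Rightarrow> (complex^'d) set. \<exists>Hres.
           (\<forall>i\<in>{1..n}. irreducible_submodule A B (Hs i)) \<and>
           csubspace Hres \<and>
           (\<forall>K. submodule A B K \<and> K \<subseteq> Hres \<longrightarrow> K = {0}) \<and>
           (\<forall>i\<in>{1..n}. \<forall>j\<in>{1..n}. i \<noteq> j \<longrightarrow> orth (Hs i) (Hs j)) \<and>
           (\<forall>i\<in>{1..n}. orth (Hs i) Hres) \<and>
           (\<forall>x. \<exists>v r. (\<forall>i\<in>{1..n}. v i \<in> Hs i) \<and> r \<in> Hres \<and> x = (\<Sum>i=1..n. v i) + r))"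
proof -
  have U: "csubspace (UNIV :: (complex^'d) set)" unfolding csubspace_def by simp
  obtain n :: nat and Hs :: "nat \<Rightarrow> (complex^'d) set" and Hres where D:
     "\<forall>i\<in>{1..n}. irreducible_submodule A B (Hs i) \<and> Hs i \<subseteq> UNIV"
     "csubspace Hres" "Hres \<subseteq> UNIV"
     "\<forall>K. submodule A B K \<and> K \<subseteq> Hres \<longrightarrow> K = {0}"
     "\<forall>i\<in>{1..n}. \<forall>j\<in>{1..n}. i \<noteq> j \<longrightarrow> orth (Hs i) (Hs j)"
     "\<forall>i\<in>{1..n}. orth (Hs i) Hres"
     "\<forall>x\<in>UNIV. \<exists>v r. (\<forall>i\<in>{1..n}. v i \<in> Hs i) \<and> r \<in> Hres \<and> x = (\<Sum>i=1..n. v i) + r"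
    using decomp[of "dim (UNIV :: (complex^'d) set)" A B, rule_format, OF conjI[OF U order_refl]]
    by (elim exE conjE) (rule that, assumption+)
  have "n \<noteq> 0"
  proof
    assume n0: "n = 0"
    have xin: "x \<in> Hres" for x
    proof -
      obtain v r where "r \<in> Hres" "x = (\<Sum>i=1..n. v i) + r" using D(7) by blast
      then show "x \<in> Hres" using n0 by simp
    qed
    have sm: "submodule A B (UNIV :: (complex^'d) set)" using U unfolding submodule_def by simp
    have "UNIV \<subseteq> Hres" using xin by blast
    then have "(UNIV :: (complex^'d) set) = {0}" using D(4) sm by blast
    then have "(vec 1 :: complex^'d) \<in> {0}" by (metis UNIV_I)
    then show False by (simp add: vec_eq_iff)
  qed
  then have n1: "n \<ge> 1" by simp
  have I1: "\<forall>i\<in>{1..n}. irreducible_submodule A B (Hs i)" using D(1) by blast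
  have I2: "\<forall>x. \<exists>v r. (\<forall>i\<in>{1..n}. v i \<in> Hs i) \<and> r \<in> Hres \<and> x = (\<Sum>i=1..n. v i) + r"
    using D(7) by blast
  show ?thesis
    apply (rule exI[of _ n], rule conjI[OF n1])
    apply (rule exI[of _ Hs], rule exI[of _ Hres])
    using I1 D(2) D(4) D(5) D(6) I2 by (intro conjI) assumption+
qed

end
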